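(* Let $\delta>0$ be a sufficiently small constant, $1\le d\le n/2$, $k$ an integer with $n/\sqrt d\le k\le\sqrt\delta\, n$, $p=d/n$, $\mu=\binom k2 p$, and $G_n\sim G(n,p)$. Then w.h.p. there are no two $k$-vertex sets $U,U'\subseteq[n]$ with $|U\cap U'|\le\delta k$ such that (i) every $V\subseteq U$ with $|V|\le\delta k$ induces at most $2\delta\mu$ edges in $G_n$, (ii) the number of edges of $G_n[U]$ lies in $\big((1-\delta)\mu,(1+\delta)\mu\big)$, and $G_n[U]\cong G_n[U']$.
   Context: $G(n,p)$ is the random graph on $[n]$ with each edge present independently with probability $p$; w.h.p. means with probability tending to 1 as $n\to\infty$. $G[U]$ denotes the subgraph induced by $U$. *)

theory Defs
  imports "HOL-Probability.Probability"
begin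

text \<open>Vertex set [n] is rendered as {..<n}; a graph is a set of 2-element vertex sets.\<close>

definition all_edges :: "nat \<Rightarrow> nat set set" where
  "all_edges n = {e. \<exists>i j. i < j \<and> j < n \<and> e = {i, j}}"

definition gnp :: "nat \<Rightarrow> real \<Rightarrow> nat set set pmf" where
  "gnp n p = map_pmf (\<lambda>f. {e \<in> all_edges n. f e})
                     (Pi_pmf (all_edges n) False (\<lambda>_. bernoulli_pmf p))"

definition induced_edges :: "nat set set \<Rightarrow> nat set \<Rightarrow> nat" where
  "induced_edges E V = card {e \<in> E. e \<subseteq> V}"

definition induced_iso :: "nat set set \<Rightarrow> nat set \<Rightarrow> nat set \<Rightarrow> bool" where
  "induced_iso E U U' \<longleftrightarrow> (\<exists>f. bij_betw f U U' \<and>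
      (\<forall>x\<in>U. \<forall>y\<in>U. {x, y} \<in> E \<longleftrightarrow> {f x, f y} \<in> E))"

definition bad_pair :: "nat \<Rightarrow> nat \<Rightarrow> real \<Rightarrow> real \<Rightarrow> nat set set \<Rightarrow> bool" where
  "bad_pair n k p \<delta> E \<longleftrightarrow>
     (let \<mu> = real (k choose 2) * p in
      \<exists>U U'. U \<subseteq> {..<n} \<and> U' \<subseteq> {..<n} \<and> card U = k \<and> card U' = k \<and>
        real (card (U \<inter> U')) \<le> \<delta> * real k \<and>
        (\<forall>V \<subseteq> U. real (card V) \<le> \<delta> * real k \<longrightarrow> real (induced_edges E V) \<le> 2 * \<delta> * \<mu>) \<and>
        (1 - \<delta>) * \<mu> < real (induced_edges E U) \<and> real (induced_edges E U) < (1 + \<delta>) * \<mu> \<and>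
        induced_iso E U U')"

end

theory Submission
  imports Defs "HOL-Real_Asymp.Real_Asymp"
begin


abbreviation "Om N p \<equiv> Pi_pmf N False (\<lambda>_. bernoulli_pmf p)"

definition BA :: "'a set \<Rightarrow> 'a set \<Rightarrow> 'a \<Rightarrow> bool set" where
  "BA P S e = (if e \<in> P then {b. b = (e \<in> S)} else UNIV)"
definition BE :: "'a set \<Rightarrow> 'a set \<Rightarrow> 'a set \<Rightarrow> 'a \<Rightarrow> bool set" where
  "BE P S T e = (if e \<in> P then {b. b = (e \<in> S)} else if e \<in> T then {True} else UNIV)"

lemma bern_prob: "0 \<le> p \<Longrightarrow> p \<le> 1 \<Longrightarrow> measure_pmf.prob (bernoulli_pmf p) {True} = p"
  by (simp add: measure_pmf_single)
lemma bern_prob2: "0 \<le> p \<Longrightarrow> p \<le> 1 \<Longrightarrow> measure_pmf.prob (bernoulli_pmf p) {b. b = c} = (if c then p else 1 - p)"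
proof -
  assume assms: "0 \<le> p" "p \<le> 1"
  have "{b. b = c} = {c}" by auto
  then show ?thesis
    using assms by (cases c) (simp_all add: measure_pmf_single)
qed

lemma ev_prob:
  assumes "finite N" "T \<subseteq> N" "T \<inter> P = {}" "0 \<le> p" "p \<le> 1"
  shows "measure_pmf.prob (Om N p) (Pi N (BE P S T)) =
         measure_pmf.prob (Om N p) (Pi N (BA P S)) * p ^ card T"
proof -
  have "measure_pmf.prob (Om N p) (Pi N (BE P S T)) = (\<Prod>e\<in>N. measure_pmf.prob (bernoulli_pmf p) (BE P S T e))"
    using assms by (simp add: measure_Pi_pmf_Pi)
  also have "\<dots> = (\<Prod>e\<in>N. measure_pmf.prob (bernoulli_pmf p) (BA P S e) * (if e \<in> T then p else 1))"
    using assms by (intro prod.cong refl) (auto simp: BE_def BA_def bern_prob)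
  also have "\<dots> = (\<Prod>e\<in>N. measure_pmf.prob (bernoulli_pmf p) (BA P S e)) * (\<Prod>e\<in>N. (if e \<in> T then p else 1))"
    by (rule prod.distrib)
  also have "(\<Prod>e\<in>N. (if e \<in> T then p else 1)) = p ^ card T"
    using assms by (simp add: prod.If_cases Int_absorb1 Int_commute)
  also have "(\<Prod>e\<in>N. measure_pmf.prob (bernoulli_pmf p) (BA P S e)) = measure_pmf.prob (Om N p) (Pi N (BA P S))"
    using assms by (simp add: measure_Pi_pmf_Pi)
  finally show ?thesis .
qed

lemma sum_A_le1:
  assumes "finite P" "P \<subseteq> N"
  shows "(\<Sum>S\<in>Pow P. measure_pmf.prob (Om N p) (Pi N (BA P S))) \<le> 1"
proof -
  have "(\<Sum>S\<in>Pow P. measure_pmf.prob (Om N p) (Pi N (BA P S))) = measure_pmf.prob (Om N p) (\<Union>S\<in>Pow P. Pi N (BA P S))"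
  proof (rule measure_pmf.finite_measure_finite_Union[symmetric])
    show "finite (Pow P)" using assms by simp
    show "disjoint_family_on (\<lambda>S. Pi N (BA P S)) (Pow P)"
      unfolding disjoint_family_on_def
    proof (intro ballI impI)
      fix S S' assume S: "S \<in> Pow P" "S' \<in> Pow P" "S \<noteq> S'"
      then obtain e where e: "e \<in> P" "(e \<in> S) \<noteq> (e \<in> S')" by blast
      show "Pi N (BA P S) \<inter> Pi N (BA P S') = {}"
      proof (rule ccontr)
        assume "Pi N (BA P S) \<inter> Pi N (BA P S') \<noteq> {}"
        then obtain h where "h \<in> Pi N (BA P S)" "h \<in> Pi N (BA P S')" by blast
        then have "h e = (e \<in> S)" "h e = (e \<in> S')" using e assms(2) by (auto simp: BA_def Pi_def)
        then show False using e by simp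
      qed
    qed
  qed auto
  also have "\<dots> \<le> 1" by simp
  finally show ?thesis .
qed

definition gE :: "nat set set \<Rightarrow> (nat set \<Rightarrow> bool) \<Rightarrow> nat set set" where
  "gE N h = {e \<in> N. h e}"

lemma finite_all_edges: "finite (all_edges n)"
proof -
  have "all_edges n \<subseteq> Pow {..<n}" by (auto simp: all_edges_def)
  then show ?thesis by (rule finite_subset) simp
qed

definition P1 :: "nat \<Rightarrow> real \<Rightarrow> real \<Rightarrow> nat set \<Rightarrow> (nat \<Rightarrow> nat) \<Rightarrow> nat set set \<Rightarrow> bool" where
  "P1 k p \<delta> U f E \<longleftrightarrow>
     (\<forall>V \<subseteq> U. real (card V) \<le> \<delta> * real k \<longrightarrow> real (induced_edges E V) \<le> 2 * \<delta> * (real (k choose 2) * p)) \<and>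
     (1 - \<delta>) * (real (k choose 2) * p) < real (induced_edges E U) \<and>
     (\<forall>x\<in>U. \<forall>y\<in>U. {x, y} \<in> E \<longleftrightarrow> {f x, f y} \<in> E)"

lemma triple_bound:
  fixes n k :: nat and p \<delta> :: real and U U' :: "nat set" and f :: "nat \<Rightarrow> nat"
  assumes U: "U \<subseteq> {..<n}" "card U = k" and U': "U' \<subseteq> {..<n}" "card U' = k"
    and f: "bij_betw f U U'" and ov: "real (card (U \<inter> U')) \<le> \<delta> * real k"
    and p: "0 < p" "p < 1" and dl: "0 \<le> \<delta>"
  shows "measure_pmf.prob (Om (all_edges n) p) {h. P1 k p \<delta> U f (gE (all_edges n) h)}
           \<le> p powr ((1 - 3 * \<delta>) * (real (k choose 2) * p))"
proof -
  define N where "N = all_edges n"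
  define \<mu> where "\<mu> = real (k choose 2) * p"
  define m where "m = (1 - 3 * \<delta>) * \<mu>"
  define PU where "PU = {e \<in> N. e \<subseteq> U}"
  define TT where "TT S = (\<lambda>e. f ` e) ` {e \<in> S. \<not> f ` e \<subseteq> U}" for S
  define Good where "Good = {S \<in> Pow PU. m \<le> real (card (TT S))}"
  have finN: "finite N" unfolding N_def by (rule finite_all_edges)
  have finPU: "finite PU" "PU \<subseteq> N" using finN unfolding PU_def by auto
  have finU: "finite U" using U(1) finite_subset by blast
  have injf: "inj_on f U" using f by (simp add: bij_betw_def)
  have fU: "f ` U = U'" using f by (simp add: bij_betw_def)
  have TT_N: "TT S \<subseteq> N" if "S \<subseteq> PU" for S
  proof
    fix e' assume "e' \<in> TT S"
    then obtain e where e: "e \<in> S" "e' = f ` e" unfolding TT_def by auto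
    then have "e \<in> N" "e \<subseteq> U" using that by (auto simp: PU_def)
    then obtain i j where ij: "i < j" "j < n" "e = {i, j}" by (auto simp: N_def all_edges_def)
    have "i \<in> U" "j \<in> U" using ij \<open>e \<subseteq> U\<close> by auto
    then have "f i \<noteq> f j" "f i \<in> U'" "f j \<in> U'" using injf ij fU by (auto simp: inj_on_def)
    then have "f i < n" "f j < n" using U' by auto
    show "e' \<in> N"
    proof (cases "f i < f j")
      case True then show ?thesis using e ij \<open>f j < n\<close> by (auto simp: N_def all_edges_def)
    next
      case False
      then have "f j < f i" using \<open>f i \<noteq> f j\<close> by simp
      then show ?thesis using e ij \<open>f i < n\<close> unfolding N_def all_edges_def
        by (intro CollectI exI[of _ "f j"] exI[of _ "f i"]) auto
    qed
  qed
  have TT_PU: "TT S \<inter> PU = {}" for S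
    by (auto simp: TT_def PU_def)
  have cover: "{h. P1 k p \<delta> U f (gE N h)} \<subseteq> (\<Union>S\<in>Good. Pi N (BE PU S (TT S)))"
  proof
    fix h assume "h \<in> {h. P1 k p \<delta> U f (gE N h)}"
    then have H: "P1 k p \<delta> U f (gE N h)" by simp
    define E where "E = gE N h"
    define S where "S = {e \<in> E. e \<subseteq> U}"
    have SPU: "S \<subseteq> PU" by (auto simp: S_def E_def gE_def PU_def)
    have finE: "finite E" using finN by (simp add: E_def gE_def)
    have iso: "\<forall>x\<in>U. \<forall>y\<in>U. {x, y} \<in> E \<longleftrightarrow> {f x, f y} \<in> E" using H by (simp add: P1_def E_def)
    have TTE: "TT S \<subseteq> E"
    proof
      fix e' assume "e' \<in> TT S"
      then obtain e where e: "e \<in> S" "e' = f ` e" unfolding TT_def by auto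
      then have "e \<in> N" "e \<subseteq> U" "e \<in> E" by (auto simp: S_def E_def gE_def)
      then obtain i j where ij: "e = {i, j}" by (auto simp: N_def all_edges_def)
      then show "e' \<in> E" using iso \<open>e \<subseteq> U\<close> \<open>e \<in> E\<close> e by auto
    qed
    have "m \<le> real (card (TT S))"
    proof -
      define Q where "Q = {e \<in> S. f ` e \<subseteq> U}"
      define R where "R = {e \<in> S. \<not> f ` e \<subseteq> U}"
      define V where "V = {x \<in> U. f x \<in> U}"
      have finS: "finite S" using finE by (simp add: S_def)
      have cS: "card S = card Q + card R"
      proof -
        have "S = Q \<union> R" by (auto simp: Q_def R_def)
        moreover have "card (Q \<union> R) = card Q + card R"
          using finS by (intro card_Un_disjoint) (auto simp: Q_def R_def)
        ultimately show ?thesis by simp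
      qed
      have "card (TT S) = card R"
        unfolding TT_def R_def
        by (rule card_image, rule inj_on_subset[OF inj_on_image_Pow[OF injf]]) (auto simp: S_def)
      have VU: "V \<subseteq> U" by (auto simp: V_def)
      have "card V = card (f ` V)" using inj_on_subset[OF injf VU] by (simp add: card_image)
      also have "\<dots> \<le> card (U \<inter> U')"
        using fU finU by (intro card_mono) (auto simp: V_def)
      finally have "real (card V) \<le> \<delta> * real k" using ov by linarith
      then have iV: "real (induced_edges E V) \<le> 2 * \<delta> * \<mu>"
        using H VU by (simp add: P1_def E_def \<mu>_def)
      have "Q \<subseteq> {e \<in> E. e \<subseteq> V}" by (auto simp: Q_def S_def V_def)
      then have "card Q \<le> induced_edges E V"
        unfolding induced_edges_def using finE by (intro card_mono) auto
      moreover have "(1 - \<delta>) * \<mu> < real (card S)"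
        using H by (simp add: P1_def E_def \<mu>_def induced_edges_def S_def)
      ultimately show ?thesis using iV cS \<open>card (TT S) = card R\<close> unfolding m_def by (simp add: algebra_simps)
    qed
    then have "S \<in> Good" using SPU by (simp add: Good_def)
    moreover have "h \<in> Pi N (BE PU S (TT S))"
    proof
      fix e assume "e \<in> N"
      show "h e \<in> BE PU S (TT S) e"
      proof (cases "e \<in> PU")
        case True then show ?thesis using \<open>e \<in> N\<close> by (auto simp: BE_def S_def E_def gE_def PU_def)
      next
        case False
        show ?thesis
        proof (cases "e \<in> TT S")
          case True then show ?thesis using False TTE by (auto simp: BE_def E_def gE_def)
        qed (use False in \<open>auto simp: BE_def\<close>)
      qed
    qed
    ultimately show "h \<in> (\<Union>S\<in>Good. Pi N (BE PU S (TT S)))" by blast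
  qed
  have finGood: "finite Good" using finPU by (simp add: Good_def)
  have "measure_pmf.prob (Om N p) {h. P1 k p \<delta> U f (gE N h)}
        \<le> measure_pmf.prob (Om N p) (\<Union>S\<in>Good. Pi N (BE PU S (TT S)))"
    using cover by (intro measure_pmf.finite_measure_mono) auto
  also have "\<dots> \<le> (\<Sum>S\<in>Good. measure_pmf.prob (Om N p) (Pi N (BE PU S (TT S))))"
    using finGood by (intro measure_pmf.finite_measure_subadditive_finite) auto
  also have "\<dots> = (\<Sum>S\<in>Good. measure_pmf.prob (Om N p) (Pi N (BA PU S)) * p ^ card (TT S))"
    using finN TT_N TT_PU p by (intro sum.cong refl ev_prob) (auto simp: Good_def)
  also have "\<dots> \<le> (\<Sum>S\<in>Good. measure_pmf.prob (Om N p) (Pi N (BA PU S)) * p powr m)"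
  proof (intro sum_mono mult_left_mono)
    fix S assume "S \<in> Good"
    then have "m \<le> real (card (TT S))" by (simp add: Good_def)
    then have "p powr real (card (TT S)) \<le> p powr m" using p by (intro powr_mono') auto
    then show "p ^ card (TT S) \<le> p powr m" using p by (simp add: powr_realpow)
  qed auto
  also have "\<dots> \<le> (\<Sum>S\<in>Pow PU. measure_pmf.prob (Om N p) (Pi N (BA PU S)) * p powr m)"
    using finPU by (intro sum_mono2) (auto simp: Good_def)
  also have "\<dots> = (\<Sum>S\<in>Pow PU. measure_pmf.prob (Om N p) (Pi N (BA PU S))) * p powr m"
    by (simp add: sum_distrib_right)
  also have "\<dots> \<le> 1 * p powr m"
    using sum_A_le1[OF finPU] by (intro mult_right_mono) auto
  finally show ?thesis by (simp add: N_def m_def \<mu>_def)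
qed

lemma bad_bound:
  fixes n k :: nat and p \<delta> :: real
  assumes p: "0 < p" "p < 1" and dl: "0 \<le> \<delta>"
  shows "measure_pmf.prob (gnp n p) {E. bad_pair n k p \<delta> E}
          \<le> real ((n choose k)^2 * k^k) * p powr ((1 - 3 * \<delta>) * (real (k choose 2) * p))"
proof -
  define N where "N = all_edges n"
  define q where "q = p powr ((1 - 3 * \<delta>) * (real (k choose 2) * p))"
  define Ks where "Ks = {U. U \<subseteq> {..<n} \<and> card U = k}"
  define Sg where "Sg = (SIGMA U:Ks. SIGMA U':Ks. (U \<rightarrow>\<^sub>E U'))"
  define Tr where "Tr = {t \<in> Sg. bij_betw (snd (snd t)) (fst t) (fst (snd t)) \<and>
                              real (card (fst t \<inter> fst (snd t))) \<le> \<delta> * real k}"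
  define Ev where "Ev t = {h. P1 k p \<delta> (fst t) (snd (snd t)) (gE N h)}" for t :: "nat set \<times> nat set \<times> (nat \<Rightarrow> nat)"
  have finKs: "finite Ks" unfolding Ks_def by (rule finite_subset[of _ "Pow {..<n}"]) auto
  have cKs: "card Ks = n choose k" unfolding Ks_def using n_subsets[of "{..<n}" k] by simp
  have finKs': "finite U" if "U \<in> Ks" for U using that finite_subset unfolding Ks_def by blast
  have finSg: "finite Sg" unfolding Sg_def using finKs finKs'
    by (intro finite_SigmaI finite_PiE) auto
  have cSg: "card Sg = (n choose k)^2 * k^k"
  proof -
    have "card Sg = (\<Sum>U\<in>Ks. \<Sum>U'\<in>Ks. card (U \<rightarrow>\<^sub>E U'))"
      unfolding Sg_def using finKs finKs'
      by (subst card_SigmaI) (auto intro!: sum.cong finite_SigmaI finite_PiE card_SigmaI)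
    also have "\<dots> = (\<Sum>U\<in>Ks. \<Sum>U'\<in>Ks. k ^ k)"
      using finKs' by (intro sum.cong refl) (auto simp: card_funcsetE Ks_def)
    also have "\<dots> = (n choose k)^2 * k^k" by (simp add: cKs power2_eq_square)
    finally show ?thesis .
  qed
  have finTr: "finite Tr" using finSg by (simp add: Tr_def)
  have cTr: "card Tr \<le> (n choose k)^2 * k^k" using cSg card_mono[OF finSg] by (auto simp: Tr_def)
  have cover: "gE N -` {E. bad_pair n k p \<delta> E} \<subseteq> (\<Union>t\<in>Tr. Ev t)"
  proof
    fix h assume "h \<in> gE N -` {E. bad_pair n k p \<delta> E}"
    then have "bad_pair n k p \<delta> (gE N h)" by simp
    then obtain U U' f0 where UU: "U \<subseteq> {..<n}" "U' \<subseteq> {..<n}" "card U = k" "card U' = k"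
      "real (card (U \<inter> U')) \<le> \<delta> * real k"
      and c1: "\<forall>V \<subseteq> U. real (card V) \<le> \<delta> * real k \<longrightarrow> real (induced_edges (gE N h) V) \<le> 2 * \<delta> * (real (k choose 2) * p)"
      and c2: "(1 - \<delta>) * (real (k choose 2) * p) < real (induced_edges (gE N h) U)"
      and bij0: "bij_betw f0 U U'" and iso0: "\<forall>x\<in>U. \<forall>y\<in>U. {x, y} \<in> gE N h \<longleftrightarrow> {f0 x, f0 y} \<in> gE N h"
      unfolding bad_pair_def Let_def induced_iso_def by blast
    define f where "f = restrict f0 U"
    have bij: "bij_betw f U U'" using bij0 unfolding f_def by (subst bij_betw_cong[of U _ f0]) auto
    have fE: "f \<in> U \<rightarrow>\<^sub>E U'" using bij0 unfolding f_def by (auto simp: bij_betw_def)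
    have "(U, U', f) \<in> Tr" using UU bij fE by (auto simp: Tr_def Sg_def Ks_def)
    moreover have "h \<in> Ev (U, U', f)"
      using c1 c2 iso0 by (simp add: Ev_def P1_def f_def)
    ultimately show "h \<in> (\<Union>t\<in>Tr. Ev t)" by blast
  qed
  have "measure_pmf.prob (gnp n p) {E. bad_pair n k p \<delta> E} = measure_pmf.prob (Om N p) (gE N -` {E. bad_pair n k p \<delta> E})"
    by (simp add: gnp_def N_def gE_def[abs_def])
  also have "\<dots> \<le> measure_pmf.prob (Om N p) (\<Union>t\<in>Tr. Ev t)"
    using cover by (intro measure_pmf.finite_measure_mono) auto
  also have "\<dots> \<le> (\<Sum>t\<in>Tr. measure_pmf.prob (Om N p) (Ev t))"
    using finTr by (intro measure_pmf.finite_measure_subadditive_finite) auto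
  also have "\<dots> \<le> (\<Sum>t\<in>Tr. q)"
  proof (intro sum_mono)
    fix t assume "t \<in> Tr"
    then obtain U U' f where t: "t = (U, U', f)" and "U \<in> Ks" "U' \<in> Ks" "bij_betw f U U'"
      "real (card (U \<inter> U')) \<le> \<delta> * real k" by (auto simp: Tr_def Sg_def)
    then show "measure_pmf.prob (Om N p) (Ev t) \<le> q"
      unfolding t Ev_def q_def N_def using p dl
      by (intro triple_bound) (auto simp: Ks_def)
  qed
  also have "\<dots> = real (card Tr) * q" by simp
  also have "\<dots> \<le> real ((n choose k)^2 * k^k) * q"
  proof (intro mult_right_mono)
    show "real (card Tr) \<le> real ((n choose k)^2 * k^k)" using cTr by (simp only: of_nat_le_iff)
  qed (auto simp: q_def)
  finally show ?thesis by (simp add: q_def)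
qed

lemma asym: "\<exists>N0. \<forall>n\<ge>N0. 32 * ln (real n) \<le> ln 2 * real n powr (1/4)"
proof -
  have "eventually (\<lambda>x::real. 32 * ln x \<le> ln 2 * x powr (1/4)) at_top" by real_asymp
  then obtain X :: real where X: "\<And>x. x \<ge> X \<Longrightarrow> 32 * ln x \<le> ln 2 * x powr (1/4)"
    by (auto simp: eventually_at_top_linorder)
  show ?thesis
    by (rule exI[of _ "nat \<lceil>X\<rceil>"]) (auto intro!: X simp: nat_ceiling_le_eq)
qed

lemma key_ineq:
  fixes n :: nat and d \<delta> :: real
  assumes n2: "n \<ge> 2" and nbig: "32 * ln (real n) \<le> ln 2 * real n powr (1/4)"
    and d1: "1 \<le> d" and d2: "d \<le> real n / 2" and sd: "128 \<le> sqrt d"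
  shows "32 * ln (real n) \<le> sqrt d * ln (real n / d)"
proof (cases "d \<le> sqrt (real n)")
  case True
  have "ln d \<le> ln (sqrt (real n))" using True d1 n2 by (subst ln_le_cancel_iff) auto
  also have "\<dots> = ln (real n) / 2" using n2 by (simp add: ln_sqrt)
  finally have "ln (real n) / 2 \<le> ln (real n / d)" using d1 n2 by (simp add: ln_div)
  moreover have "ln (real n) \<ge> 0" using n2 by simp
  ultimately have "128 * (ln (real n) / 2) \<le> sqrt d * ln (real n / d)"
    using sd d1 by (intro mult_mono) auto
  then show ?thesis using \<open>ln (real n) \<ge> 0\<close> by linarith
next
  case False
  have "real n powr (1/4) = sqrt (sqrt (real n))"
    by (simp add: sqrt_def root_powr_inverse powr_powr)
  also have "\<dots> \<le> sqrt d" using False by simp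
  finally have a: "real n powr (1/4) \<le> sqrt d" .
  have "2 \<le> real n / d" using d1 d2 by (simp add: field_simps)
  then have b: "ln 2 \<le> ln (real n / d)" by simp
  have "ln 2 * real n powr (1/4) \<le> sqrt d * ln (real n / d)"
    using a b d1 by (subst mult.commute, intro mult_mono) auto
  then show ?thesis using nbig by linarith
qed

lemma final_bound:
  fixes n k :: nat and d \<delta> :: real
  assumes n2: "n \<ge> 2" and nbig: "32 * ln (real n) \<le> ln 2 * real n powr (1/4)"
    and dl: "0 < \<delta>" "\<delta> \<le> 1/16384"
    and d1: "1 \<le> d" and d2: "d \<le> real n / 2"
    and k1: "real n / sqrt d \<le> real k" and k2: "real k \<le> sqrt \<delta> * real n"
  shows "real ((n choose k)^2 * k^k) * (d / real n) powr ((1 - 3 * \<delta>) * (real (k choose 2) * (d / real n))) \<le> 1 / real n"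
proof -
  define p where "p = d / real n"
  define L where "L = ln (real n / d)"
  have npos: "real n > 0" using n2 by simp
  have p0: "0 < p" using d1 npos by (simp add: p_def)
  have p1: "p < 1" using d1 d2 npos by (simp add: p_def field_simps)
  have lnp: "ln p = - L" using d1 npos by (simp add: p_def L_def ln_div)
  have sdpos: "sqrt d > 0" using d1 by simp
  have sdn: "sqrt d \<le> sqrt (real n / 2)" using d2 by simp
  have k2': "2 \<le> real k"
  proof -
    have "2 * sqrt d \<le> real n"
    proof -
      have "(2 * sqrt d)^2 = 4 * d" using d1 by (simp add: power_mult_distrib)
      also have "\<dots> \<le> (real n)^2" 
      proof -
        have "2 * real n \<le> real n * real n" using n2 by (intro mult_right_mono) auto
        then show ?thesis using d2 by (simp add: power2_eq_square)
      qed
      finally have h: "(2 * sqrt d)^2 \<le> (real n)^2" .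
      show ?thesis by (rule power2_le_imp_le[OF h]) simp
    qed
    then have "2 \<le> real n / sqrt d" using sdpos by (simp add: field_simps)
    then show ?thesis using k1 by linarith
  qed
  have sdel: "sqrt \<delta> \<le> 1/128"
  proof -
    have "sqrt \<delta> \<le> sqrt (1/16384)" using dl by simp
    also have "sqrt (1/16384) = (1/128 :: real)" by (simp add: real_sqrt_divide)
    finally show ?thesis .
  qed
  have kn: "k \<le> n"
  proof -
    have "sqrt \<delta> * real n \<le> real n" using mult_right_mono[of "sqrt \<delta>" 1 "real n"] sdel npos dl by simp
    then show ?thesis using k2 by linarith
  qed
  have sd128: "128 \<le> sqrt d"
  proof -
    have "real n \<le> real k * sqrt d" using k1 sdpos by (simp add: divide_le_eq)
    also have "\<dots> \<le> sqrt \<delta> * real n * sqrt d" using k2 sdpos by (intro mult_right_mono) auto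
    finally have "real n \<le> sqrt \<delta> * real n * sqrt d" .
    then have "real n * 1 \<le> real n * (sqrt \<delta> * sqrt d)" by (simp add: mult_ac)
    then have "1 \<le> sqrt \<delta> * sqrt d" using npos by (subst (asm) mult_le_cancel_left_pos) auto
    then have "1 \<le> (1/128) * sqrt d" using mult_right_mono[of "sqrt \<delta>" "1/128" "sqrt d"] sdel sdpos by linarith
    then show ?thesis by simp
  qed
  have key: "32 * ln (real n) \<le> sqrt d * L"
    unfolding L_def by (rule key_ineq[OF n2 nbig d1 d2 sd128])
  have lnn: "ln (real n) \<ge> 0" using n2 by simp
  have kp: "sqrt d \<le> real k * p"
  proof -
    have "sqrt d = (real n / sqrt d) * p" 
    proof -
      have "(real n / sqrt d) * p = d / sqrt d" using npos by (simp add: p_def)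
      also have "\<dots> = sqrt d" using d1 by (simp add: real_div_sqrt)
      finally show ?thesis by simp
    qed
    also have "\<dots> \<le> real k * p" using k1 p0 by (intro mult_right_mono) auto
    finally show ?thesis .
  qed
  define \<mu> where "\<mu> = real (k choose 2) * p"
  have ch: "real (k choose 2) = real k * (real k - 1) / 2"
  proof -
    have ev: "even (k * (k - 1))" by (cases k) auto
    then have "2 * (k choose 2) = k * (k - 1)" by (simp add: choose_two)
    then have "2 * real (k choose 2) = real k * real (k - 1)" by (metis of_nat_mult of_nat_numeral)
    then show ?thesis using k2' by (simp add: of_nat_diff)
  qed
  have mu0: "\<mu> \<ge> 0" using p0 by (simp add: \<mu>_def)
  have "\<mu> * L / 2 \<ge> 4 * real k * ln (real n)"
  proof -
    have L0: "L \<ge> 0" using d1 d2 npos by (simp add: L_def)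
    have "\<mu> * L / 2 = real k * ((real k - 1) * p) * L / 4" by (simp add: \<mu>_def ch)
    have "(real k - 1) \<ge> real k / 2" using k2' by simp
    then have "(real k - 1) * p \<ge> real k / 2 * p" using p0 by (intro mult_right_mono) auto
    then have "(real k - 1) * p \<ge> sqrt d / 2" using kp by linarith
    then have "((real k - 1) * p) * L \<ge> sqrt d / 2 * L" using L0 by (intro mult_right_mono) auto
    then have "((real k - 1) * p) * L \<ge> 16 * ln (real n)" using key by linarith
    then have "real k * (((real k - 1) * p) * L) \<ge> real k * (16 * ln (real n))" by (intro mult_left_mono) auto
    then show ?thesis using \<open>\<mu> * L / 2 = _\<close> by (simp add: algebra_simps)
  qed
  have cnt: "real ((n choose k)^2 * k^k) \<le> exp (3 * real k * ln (real n))"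
  proof -
    have "(n choose k)^2 * k^k \<le> (n^k)^2 * n^k"
      using binomial_le_pow[OF kn] kn by (intro mult_mono power_mono) auto
    also have "(n^k)^2 * n^k = n ^ (k * 2 + k)" by (simp only: power_add power_mult)
    also have "k * 2 + k = 3 * k" by simp
    finally have "real ((n choose k)^2 * k^k) \<le> real (n ^ (3 * k))" by (simp only: of_nat_le_iff)
    also have "real (n ^ (3 * k)) = real n ^ (3 * k)" by simp
    also have "\<dots> = exp (ln (real n ^ (3 * k)))" using npos by simp
    also have "ln (real n ^ (3 * k)) = real (3 * k) * ln (real n)" using npos by (simp add: ln_realpow)
    also have "real (3 * k) * ln (real n) = 3 * real k * ln (real n)" by simp
    finally show ?thesis .
  qed
  have pw: "p powr ((1 - 3 * \<delta>) * \<mu>) \<le> exp (- (\<mu> * L / 2))"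
  proof -
    have "\<mu> / 2 \<le> (1 - 3 * \<delta>) * \<mu>" using mult_right_mono[of "1/2" "1 - 3 * \<delta>" \<mu>] dl mu0 by simp
    then have "p powr ((1 - 3 * \<delta>) * \<mu>) \<le> p powr (\<mu> / 2)" using p0 p1 by (intro powr_mono') auto
    also have "\<dots> = exp (- (\<mu> * L / 2))" using p0 lnp by (simp add: powr_def)
    finally show ?thesis .
  qed
  have "real ((n choose k)^2 * k^k) * p powr ((1 - 3 * \<delta>) * \<mu>) \<le> exp (3 * real k * ln (real n)) * exp (- (\<mu> * L / 2))"
    using cnt pw by (intro mult_mono) auto
  also have "\<dots> = exp (3 * real k * ln (real n) - \<mu> * L / 2)" by (simp add: exp_add[symmetric])
  also have "\<dots> \<le> exp (- ln (real n))"
  proof -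
    have "real k * ln (real n) \<ge> ln (real n)" using mult_right_mono[of 1 "real k" "ln (real n)"] k2' lnn by simp
    then show ?thesis using \<open>\<mu> * L / 2 \<ge> _\<close> by simp
  qed
  also have "\<dots> = 1 / real n" using npos by (simp add: exp_minus exp_ln inverse_eq_divide)
  finally show ?thesis by (simp add: p_def \<mu>_def)
qed

theorem mainTheorem13:
  shows "\<exists>\<delta>\<^sub>0 > 0. \<forall>\<delta>. 0 < \<delta> \<and> \<delta> < \<delta>\<^sub>0 \<longrightarrow>
    (\<forall>(d :: nat \<Rightarrow> real) (k :: nat \<Rightarrow> nat).
      (\<forall>\<^sub>F n in sequentially. 1 \<le> d n \<and> d n \<le> real n / 2 \<and>
          real n / sqrt (d n) \<le> real (k n) \<and> real (k n) \<le> sqrt \<delta> * real n)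
      \<longrightarrow> ((\<lambda>n. measure_pmf.prob (gnp n (d n / real n))
                 {E. \<not> bad_pair n (k n) (d n / real n) \<delta> E}) \<longlongrightarrow> 1) sequentially)"
proof (intro exI[of _ "1/16384"] conjI allI impI)
  fix \<delta> :: real and d :: "nat \<Rightarrow> real" and k :: "nat \<Rightarrow> nat"
  assume dl: "0 < \<delta> \<and> \<delta> < 1/16384"
  assume H: "\<forall>\<^sub>F n in sequentially. 1 \<le> d n \<and> d n \<le> real n / 2 \<and>
          real n / sqrt (d n) \<le> real (k n) \<and> real (k n) \<le> sqrt \<delta> * real n"
  obtain N0 where N0: "\<And>n. n \<ge> N0 \<Longrightarrow> 32 * ln (real n) \<le> ln 2 * real n powr (1/4)"
    using asym by blast
  have ev2: "\<forall>\<^sub>F n in sequentially. n \<ge> max N0 2" by (rule eventually_ge_at_top)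
  have low: "\<forall>\<^sub>F n in sequentially. 1 - 1 / real n \<le> measure_pmf.prob (gnp n (d n / real n))
                 {E. \<not> bad_pair n (k n) (d n / real n) \<delta> E}"
    using H ev2
  proof eventually_elim
    case (elim n)
    then have n2: "n \<ge> 2" and nb: "n \<ge> N0" by auto
    have npos: "real n > 0" using n2 by simp
    have p0: "0 < d n / real n" using elim npos by simp
    have p1: "d n / real n < 1" using elim npos by (simp add: field_simps)
    have "measure_pmf.prob (gnp n (d n / real n)) {E. bad_pair n (k n) (d n / real n) \<delta> E}
          \<le> real ((n choose k n)^2 * k n ^ k n) * (d n / real n) powr ((1 - 3 * \<delta>) * (real (k n choose 2) * (d n / real n)))"
      using p0 p1 dl by (intro bad_bound) auto
    also have "\<dots> \<le> 1 / real n"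
      using elim dl n2 N0[OF nb] by (intro final_bound) auto
    finally have b: "measure_pmf.prob (gnp n (d n / real n)) {E. bad_pair n (k n) (d n / real n) \<delta> E} \<le> 1 / real n" .
    have "{E. \<not> bad_pair n (k n) (d n / real n) \<delta> E} = UNIV - {E. bad_pair n (k n) (d n / real n) \<delta> E}" by auto
    then have "measure_pmf.prob (gnp n (d n / real n)) {E. \<not> bad_pair n (k n) (d n / real n) \<delta> E}
       = 1 - measure_pmf.prob (gnp n (d n / real n)) {E. bad_pair n (k n) (d n / real n) \<delta> E}"
      using measure_pmf.prob_compl[of "{E. bad_pair n (k n) (d n / real n) \<delta> E}" "gnp n (d n / real n)"] by simp
    then show ?case using b by linarith
  qed
  have up: "\<forall>\<^sub>F n in sequentially. measure_pmf.prob (gnp n (d n / real n))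
                 {E. \<not> bad_pair n (k n) (d n / real n) \<delta> E} \<le> 1"
    by (simp add: measure_pmf.prob_le_1)
  have l1: "(\<lambda>n. 1 - 1 / real n) \<longlonglongrightarrow> (1::real)"
    using tendsto_diff[OF tendsto_const lim_inverse_n'[unfolded inverse_eq_divide]] by simp
  show "((\<lambda>n. measure_pmf.prob (gnp n (d n / real n))
                 {E. \<not> bad_pair n (k n) (d n / real n) \<delta> E}) \<longlongrightarrow> 1) sequentially"
    by (rule tendsto_sandwich[OF low up l1 tendsto_const])
qed (simp)

end
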